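(* Let $H$ be $d^4/dx^4$ in $L_2(\mathbb{R}_+)$ with boundary conditions $u''(0)=\alpha u(0)+\alpha_1u'(0)$, $u'''(0)=-\alpha_2u(0)-\bar\alpha u'(0)$ ($\alpha\in\mathbb{C}$, $\alpha_1,\alpha_2\in\mathbb{R}$). A point $\lambda=k^4$, $k>0$, is an eigenvalue of $H$ if and only if $\alpha=\bar\alpha$, $\alpha_1=(\alpha-k^2)k^{-1}$ and $\alpha_2=(\alpha+k^2)k$. In this case $\Omega'(k)=-2k(\alpha-ik^2)\neq0$, so $k$ is a simple zero of $\Omega$.
   Context: $\alpha_0=\alpha_1\alpha_2-|\alpha|^2$, $\Omega(\zeta)=\alpha_0+(1-i)\alpha_2\zeta+2i\operatorname{Re}\alpha\,\zeta^2-(1+i)\alpha_1\zeta^3-\zeta^4$. $H$ acts as $u\mapsto u^{(4)}$ on $u\in\mathsf{H}^4(\mathbb{R}_+)$ satisfying the boundary conditions; it is self-adjoint. *)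

theory Defs
  imports "HOL-Analysis.Analysis"
begin

text \<open>Elements of H^4(R_+), represented by a function u together with its
classical one-sided derivatives D 1, ..., D 4 on [0, infinity) (D 0 = u),
all of which are square integrable on [0, infinity).\<close>

definition H4_halfline :: "(nat \<Rightarrow> real \<Rightarrow> complex) \<Rightarrow> bool" where
  "H4_halfline D \<longleftrightarrow>
     (\<forall>j<4. \<forall>t\<ge>0. (D j has_vector_derivative D (Suc j) t) (at t within {0..}))
     \<and> continuous_on {0..} (D 4)
     \<and> (\<forall>j\<le>4. (\<lambda>t. (cmod (D j t))\<^sup>2) integrable_on {0..})"

definition bc_H :: "complex \<Rightarrow> real \<Rightarrow> real \<Rightarrow> (nat \<Rightarrow> real \<Rightarrow> complex) \<Rightarrow> bool" where
  "bc_H \<alpha> \<alpha>1 \<alpha>2 D \<longleftrightarrow>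
     D 2 0 = \<alpha> * D 0 0 + of_real \<alpha>1 * D 1 0 \<and>
     D 3 0 = - of_real \<alpha>2 * D 0 0 - cnj \<alpha> * D 1 0"

definition is_eigenvalue_H :: "complex \<Rightarrow> real \<Rightarrow> real \<Rightarrow> complex \<Rightarrow> bool" where
  "is_eigenvalue_H \<alpha> \<alpha>1 \<alpha>2 lam \<longleftrightarrow>
     (\<exists>D. H4_halfline D \<and> bc_H \<alpha> \<alpha>1 \<alpha>2 D \<and> (\<exists>t\<ge>0. D 0 t \<noteq> 0)
          \<and> (\<forall>t\<ge>0. D 4 t = lam * D 0 t))"

definition alpha0 :: "complex \<Rightarrow> real \<Rightarrow> real \<Rightarrow> real" where
  "alpha0 \<alpha> \<alpha>1 \<alpha>2 = \<alpha>1 * \<alpha>2 - (cmod \<alpha>)\<^sup>2"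

definition Omega :: "complex \<Rightarrow> real \<Rightarrow> real \<Rightarrow> complex \<Rightarrow> complex" where
  "Omega \<alpha> \<alpha>1 \<alpha>2 \<zeta> = of_real (alpha0 \<alpha> \<alpha>1 \<alpha>2) + (1 - \<i>) * of_real \<alpha>2 * \<zeta>
     + 2 * \<i> * of_real (Re \<alpha>) * \<zeta>\<^sup>2 - (1 + \<i>) * of_real \<alpha>1 * \<zeta>^3 - \<zeta>^4"

end

theory Submission
  imports Defs "HOL-Analysis.Analysis"
begin


lemma ode_exp:
  fixes g :: "real \<Rightarrow> complex" and c :: complex
  assumes d: "\<And>t. t \<ge> 0 \<Longrightarrow> (g has_vector_derivative c * g t) (at t within {0..})"
    and t: "t \<ge> 0"
  shows "g t = g 0 * exp (c * of_real t)"
proof -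
  define h where "h t = g t * exp (- (c * of_real t))" for t
  have e: "((\<lambda>t. exp (- (c * of_real t))) has_vector_derivative (- c * exp (- (c * of_real t)))) (at t within {0..})" for t :: real
  proof -
    have "((\<lambda>z. exp (- (c * z))) has_field_derivative (- c * exp (- (c * of_real t)))) (at (of_real t))"
      by (auto intro!: derivative_eq_intros)
    then show ?thesis by (rule has_vector_derivative_real_field)
  qed
  have hd: "(h has_vector_derivative 0) (at t within {0..})" if "t \<ge> 0" for t
  proof -
    have "(h has_vector_derivative (g t * (- c * exp (- (c * of_real t))) + c * g t * exp (- (c * of_real t)))) (at t within {0..})"
      unfolding h_def by (rule has_vector_derivative_mult[OF d[OF that] e])
    moreover have "g t * (- c * exp (- (c * of_real t))) + c * g t * exp (- (c * of_real t)) = 0"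
      by (simp add: algebra_simps)
    ultimately show ?thesis by simp
  qed
  have "\<exists>C. \<forall>x\<in>{0..}. h x = C"
    by (rule has_derivative_zero_constant) (use hd in \<open>auto simp: has_vector_derivative_def\<close>)
  then obtain C where C: "\<And>x. x \<ge> 0 \<Longrightarrow> h x = C" by auto
  have "h t = h 0" using C t by (metis order_refl)
  then have "g t * exp (- (c * of_real t)) = g 0" by (simp add: h_def)
  then show ?thesis by (simp add: exp_minus field_simps)
qed

lemma not_int:
  fixes F :: "real \<Rightarrow> real"
  assumes i: "F integrable_on {0..}" and b: "\<And>t. t \<ge> 0 \<Longrightarrow> F t \<ge> e" and e: "e > 0"
  shows False
proof -
  obtain n :: nat where n: "real n * e > integral {0..} F"
    using reals_Archimedean3[OF e] by blast
  have i2: "F integrable_on {0..real n}" by (rule integrable_on_subinterval[OF i]) auto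
  have "integral {0..real n} (\<lambda>_. e) \<le> integral {0..real n} F"
    by (rule integral_le) (use i2 b in auto)
  also have "\<dots> \<le> integral {0..} F"
    by (rule integral_subset_le) (use i i2 b e in \<open>auto intro: order_trans[of 0 e] less_imp_le\<close>)
  finally show False using n by simp
qed



lemma sq4: fixes a b c d :: real shows "(a+b+c+d)^2 \<le> 4*(a^2+b^2+c^2+d^2)"
proof -
  have "0 \<le> (a-b)^2 + (a-c)^2 + (a-d)^2+(b-c)^2+(b-d)^2+(c-d)^2" by simp
  then show ?thesis by (simp add: power2_eq_square algebra_simps)
qed

lemma G_deriv:
  fixes D :: "nat \<Rightarrow> real \<Rightarrow> complex" and r :: complex
  assumes H: "H4_halfline D" and E: "\<forall>t\<ge>0. D 4 t = of_real (k^4) * D 0 t"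
    and r: "r^4 = of_real (k^4)" and t: "t \<ge> 0"
  shows "((\<lambda>t. D 3 t + r*D 2 t + r^2*D 1 t + r^3*D 0 t) has_vector_derivative
           r * (D 3 t + r*D 2 t + r^2*D 1 t + r^3*D 0 t)) (at t within {0..})"
proof -
  have d: "\<And>j. j < 4 \<Longrightarrow> (D j has_vector_derivative D (Suc j) t) (at t within {0..})"
    using H t unfolding H4_halfline_def by blast
  have "((\<lambda>t. D 3 t + r*D 2 t + r^2*D 1 t + r^3*D 0 t) has_vector_derivative
           (D 4 t + r*D 3 t + r^2*D 2 t + r^3*D 1 t)) (at t within {0..})"
  proof -
    have d3: "(D 3 has_vector_derivative D 4 t) (at t within {0..})" using d[of 3] by (simp add: numeral_Bit0 numeral_Bit1)
    have d2: "(D 2 has_vector_derivative D 3 t) (at t within {0..})" using d[of 2] by (simp add: numeral_Bit0 numeral_Bit1)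
    have d1: "(D 1 has_vector_derivative D 2 t) (at t within {0..})" using d[of 1] by (simp add: numeral_Bit0 numeral_Bit1)
    have d0: "(D 0 has_vector_derivative D 1 t) (at t within {0..})" using d[of 0] by simp
    show ?thesis
      by (intro has_vector_derivative_add has_vector_derivative_mult_right d0 d1 d2 d3)
  qed
  moreover have "D 4 t + r*D 3 t + r^2*D 2 t + r^3*D 1 t = r * (D 3 t + r*D 2 t + r^2*D 1 t + r^3*D 0 t)"
    using E t r by (simp add: algebra_simps power_numeral_reduce)
  ultimately show ?thesis by simp
qed



lemma G_zero:
  fixes D :: "nat \<Rightarrow> real \<Rightarrow> complex" and r :: complex
  assumes H: "H4_halfline D" and E: "\<forall>t\<ge>0. D 4 t = of_real (k^4) * D 0 t"
    and r: "r^4 = of_real (k^4)" and rr: "Re r \<ge> 0" and rk: "cmod r = k" and k: "k > 0"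
    and t: "t \<ge> 0"
  shows "D 3 t + r*D 2 t + r^2*D 1 t + r^3*D 0 t = 0"
proof -
  define G where "G t = D 3 t + r*D 2 t + r^2*D 1 t + r^3*D 0 t" for t
  have Gexp: "G s = G 0 * exp (r * of_real s)" if "s \<ge> 0" for s
    unfolding G_def by (rule ode_exp[OF G_deriv[OF H E r] that])
  define F where "F t = (cmod (D 0 t))\<^sup>2 + (cmod (D 1 t))\<^sup>2 + (cmod (D 2 t))\<^sup>2 + (cmod (D 3 t))\<^sup>2" for t
  have ij: "(\<lambda>t. (cmod (D j t))\<^sup>2) integrable_on {0..}" if "j \<le> 4" for j
    using H that unfolding H4_halfline_def by blast
  have Fi: "F integrable_on {0..}"
    unfolding F_def by (intro integrable_add ij) auto
  define M where "M = 1 + k^2 + k^4 + k^6"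
  have M: "M > 0" unfolding M_def by (simp add: add_pos_nonneg)
  have G0: "G 0 = 0"
  proof (rule ccontr)
    assume nz: "G 0 \<noteq> 0"
    have "F s \<ge> (cmod (G 0))\<^sup>2 / (4*M)" if s: "s \<ge> 0" for s
    proof -
      have "cmod (exp (r * of_real s)) \<ge> 1"
        using rr s by (simp add: norm_exp_eq_Re)
      then have "cmod (G 0) \<le> cmod (G s)"
        using Gexp[OF s] by (simp add: norm_mult mult_le_cancel_left1)
      also have "cmod (G s) \<le> cmod (D 3 s) + k * cmod (D 2 s) + k^2 * cmod (D 1 s) + k^3 * cmod (D 0 s)"
        unfolding G_def using rk
        by (smt (verit) norm_mult norm_power norm_triangle_ineq)
      finally have A: "cmod (G 0) \<le> cmod (D 3 s) + k * cmod (D 2 s) + k^2 * cmod (D 1 s) + k^3 * cmod (D 0 s)" .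
      have "(cmod (G 0))\<^sup>2 \<le> (cmod (D 3 s) + k * cmod (D 2 s) + k^2 * cmod (D 1 s) + k^3 * cmod (D 0 s))\<^sup>2"
        using A by (intro power_mono) auto
      also have "\<dots> \<le> 4 * ((cmod (D 3 s))\<^sup>2 + (k * cmod (D 2 s))\<^sup>2 + (k^2 * cmod (D 1 s))\<^sup>2 + (k^3 * cmod (D 0 s))\<^sup>2)"
        by (rule sq4)
      also have "\<dots> \<le> 4 * (M * F s)"
      proof -
        have "(k * cmod (D 2 s))\<^sup>2 \<le> M * (cmod (D 2 s))\<^sup>2"
          unfolding M_def power_mult_distrib by (intro mult_right_mono) auto
        moreover have "(k^2 * cmod (D 1 s))\<^sup>2 \<le> M * (cmod (D 1 s))\<^sup>2"
          unfolding M_def power_mult_distrib by (intro mult_right_mono) auto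
        moreover have "(k^3 * cmod (D 0 s))\<^sup>2 \<le> M * (cmod (D 0 s))\<^sup>2"
          unfolding M_def power_mult_distrib by (intro mult_right_mono) auto
        moreover have "(cmod (D 3 s))\<^sup>2 \<le> M * (cmod (D 3 s))\<^sup>2"
        proof -
          have "1 \<le> M" unfolding M_def by simp
          then show ?thesis by (metis mult_right_mono mult_1 zero_le_power2)
        qed
        ultimately show ?thesis unfolding F_def by (simp add: algebra_simps)
      qed
      finally show ?thesis using M by (simp add: field_simps)
    qed
    moreover have "(cmod (G 0))\<^sup>2 / (4*M) > 0" using nz M by simp
    ultimately show False using not_int[OF Fi] by blast
  qed
  show ?thesis using Gexp[OF t] G0 by (simp add: G_def)
qed



lemma lin_alg:
  fixes a0 a1 a2 a3 :: complex and k :: real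
  assumes k: "k > 0"
    and e1: "a3 + of_real k * a2 + (of_real k)^2 * a1 + (of_real k)^3 * a0 = 0"
    and e2: "a3 + (\<i> * of_real k) * a2 + (\<i> * of_real k)^2 * a1 + (\<i> * of_real k)^3 * a0 = 0"
    and e3: "a3 + (- \<i> * of_real k) * a2 + (- \<i> * of_real k)^2 * a1 + (- \<i> * of_real k)^3 * a0 = 0"
  shows "a1 = - (of_real k * a0) \<and> a2 = (of_real k)^2 * a0 \<and> a3 = - ((of_real k)^3 * a0)"
proof -
  have kk: "(of_real k :: complex) \<noteq> 0" using k by simp
  have s: "2 * a3 - 2 * (of_real k)^2 * a1 = 0" using arg_cong2[OF e2 e3, of "(+)"]
    by (simp add: algebra_simps power2_eq_square power3_eq_cube)
  have d: "2 * \<i> * of_real k * (a2 - (of_real k)^2 * a0) = 0" using arg_cong2[OF e2 e3, of "(-)"]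
    by (simp add: algebra_simps power2_eq_square power3_eq_cube)
  have A2: "a2 = (of_real k)^2 * a0" using d kk by simp
  have A3: "a3 = (of_real k)^2 * a1" using s by simp
  have "2 * (of_real k)^2 * (a1 + of_real k * a0) = 0" using e1 unfolding A2 A3
    by (simp add: algebra_simps power2_eq_square power3_eq_cube)
  then have A1: "a1 = - (of_real k * a0)" using kk by (simp add: add_eq_0_iff2)
  show ?thesis using A1 A2 A3 by (simp add: power2_eq_square power3_eq_cube)
qed



lemma forward:
  fixes \<alpha> :: complex and \<alpha>1 \<alpha>2 k :: real
  assumes k: "k > 0" and ev: "is_eigenvalue_H \<alpha> \<alpha>1 \<alpha>2 (of_real (k ^ 4))"
  shows "\<alpha> = of_real (k\<^sup>2 + \<alpha>1 * k) \<and> \<alpha>2 = k^3 + k * (k\<^sup>2 + \<alpha>1 * k)"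
proof -
  obtain D where H: "H4_halfline D" and bc: "bc_H \<alpha> \<alpha>1 \<alpha>2 D" and nz: "\<exists>t\<ge>0. D 0 t \<noteq> 0"
    and E: "\<forall>t\<ge>0. D 4 t = of_real (k^4) * D 0 t"
    using ev unfolding is_eigenvalue_H_def by blast
  have rel: "D 1 t = - (of_real k * D 0 t) \<and> D 2 t = (of_real k)^2 * D 0 t \<and> D 3 t = - ((of_real k)^3 * D 0 t)"
    if t: "t \<ge> 0" for t
  proof (rule lin_alg[OF k])
    show "D 3 t + of_real k * D 2 t + (of_real k)^2 * D 1 t + (of_real k)^3 * D 0 t = 0"
      by (rule G_zero[OF H E _ _ _ k t]) (use k in \<open>auto simp flip: of_real_power\<close>)
    show "D 3 t + (\<i> * of_real k) * D 2 t + (\<i> * of_real k)^2 * D 1 t + (\<i> * of_real k)^3 * D 0 t = 0"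
      by (rule G_zero[OF H E _ _ _ k t]) (use k in \<open>auto simp: power_mult_distrib norm_mult simp flip: of_real_power\<close>)
    show "D 3 t + (- \<i> * of_real k) * D 2 t + (- \<i> * of_real k)^2 * D 1 t + (- \<i> * of_real k)^3 * D 0 t = 0"
      by (rule G_zero[OF H E _ _ _ k t]) (use k in \<open>auto simp: power_mult_distrib norm_mult simp flip: of_real_power\<close>)
  qed
  have sol: "D 0 t = D 0 0 * exp (- of_real k * of_real t)" if t: "t \<ge> 0" for t
  proof -
    define r :: complex where "r = - of_real k"
    have r4: "r^4 = of_real (k^4)" unfolding r_def by simp
    have A: "D 3 t + r*D 2 t + r^2*D 1 t + r^3*D 0 t = (D 3 0 + r*D 2 0 + r^2*D 1 0 + r^3*D 0 0) * exp (r * of_real t)"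
      by (rule ode_exp[OF G_deriv[OF H E r4] t])
    have B: "D 3 t + r*D 2 t + r^2*D 1 t + r^3*D 0 t = - 4 * (of_real k)^3 * D 0 t"
      using rel[OF t] unfolding r_def by (simp add: algebra_simps power2_eq_square power3_eq_cube)
    have C: "D 3 0 + r*D 2 0 + r^2*D 1 0 + r^3*D 0 0 = - 4 * (of_real k)^3 * D 0 0"
      using rel[of 0] unfolding r_def by (simp add: algebra_simps power2_eq_square power3_eq_cube)
    have "(- 4 * (of_real k)^3) * D 0 t = (- 4 * (of_real k)^3) * (D 0 0 * exp (r * of_real t))"
      using A B C by (metis mult.assoc)
    then have "D 0 t = D 0 0 * exp (r * of_real t)" using k by simp
    then show ?thesis unfolding r_def by simp
  qed
  have u0: "D 0 0 \<noteq> 0" using nz sol by fastforce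
  have kk: "(of_real k :: complex) \<noteq> 0" using k by simp
  from bc have b1: "D 2 0 = \<alpha> * D 0 0 + of_real \<alpha>1 * D 1 0" and b2: "D 3 0 = - of_real \<alpha>2 * D 0 0 - cnj \<alpha> * D 1 0"
    unfolding bc_H_def by auto
  have "(of_real k)^2 * D 0 0 = (\<alpha> - of_real \<alpha>1 * of_real k) * D 0 0"
    using b1 rel[of 0] by (simp add: algebra_simps)
  then have "(of_real k)^2 = \<alpha> - of_real \<alpha>1 * of_real k" using u0 by (simp only: mult_cancel_right) simp
  then have "\<alpha> = (of_real k)^2 + of_real \<alpha>1 * of_real k" by (simp add: algebra_simps)
  then have a: "\<alpha> = of_real (k\<^sup>2 + \<alpha>1 * k)" by simp
  have "(- ((of_real k)^3)) * D 0 0 = (- of_real \<alpha>2 + cnj \<alpha> * of_real k) * D 0 0"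
    using b2 rel[of 0] by (simp add: algebra_simps)
  then have "- ((of_real k)^3) = (- of_real \<alpha>2 + cnj \<alpha> * of_real k)" using u0 by (simp only: mult_cancel_right) simp
  then have "- (k^3) = - \<alpha>2 + (k\<^sup>2 + \<alpha>1 * k) * k" unfolding a
    by (metis (no_types, lifting) complex_cnj_complex_of_real of_real_add of_real_eq_iff of_real_minus of_real_mult of_real_power)
  then show ?thesis using a by (simp add: algebra_simps)
qed



lemma backward:
  fixes \<alpha> :: complex and \<alpha>1 \<alpha>2 k :: real
  assumes k: "k > 0" and a: "\<alpha> = of_real a" and a1: "\<alpha>1 = (a - k\<^sup>2) / k" and a2: "\<alpha>2 = (a + k\<^sup>2) * k"
  shows "is_eigenvalue_H \<alpha> \<alpha>1 \<alpha>2 (of_real (k ^ 4))"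
proof -
  define D :: "nat \<Rightarrow> real \<Rightarrow> complex" where "D j t = of_real ((-k)^j * exp (- k * t))" for j t
  have der: "(D j has_vector_derivative D (Suc j) t) (at t within {0..})" for j t
  proof -
    have "((\<lambda>t. (-k)^j * exp (- k * t)) has_field_derivative ((-k)^(Suc j) * exp (- k * t))) (at t within {0..})"
      by (auto intro!: derivative_eq_intros)
    then show ?thesis unfolding D_def [abs_def] by (rule has_vector_derivative_of_real)
  qed
  have int: "(\<lambda>t. (cmod (D j t))\<^sup>2) integrable_on {0..}" for j
  proof -
    have eq: "(\<lambda>t. (cmod (D j t))\<^sup>2) = (\<lambda>t. k^(2*j) * exp (- (2*k) * t))"
    proof
      fix t
      have "(cmod (D j t))\<^sup>2 = ((-k)^j * exp (- k * t))\<^sup>2"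
        by (simp only: D_def norm_of_real power2_abs)
      also have "\<dots> = ((-k)\<^sup>2)^j * (exp (- k * t) * exp (- k * t))"
      proof -
        have "(-k)^j * (-k)^j = k^j*k^j" by (metis power_mult_distrib minus_mult_minus)
        then show ?thesis by (simp add: power_mult_distrib power2_eq_square power_mult[symmetric] mult.commute)
      qed
      also have "\<dots> = k^(2*j) * exp (- (2*k) * t)"
        by (simp add: power_mult exp_add[symmetric] algebra_simps power2_eq_square power_mult_distrib)
      finally show "(cmod (D j t))\<^sup>2 = k^(2*j) * exp (- (2*k) * t)" .
    qed
    show ?thesis unfolding eq
      by (rule integrable_on_mult_right) (rule integrable_on_exp_minus_to_infinity, use k in simp)
  qed
  have H: "H4_halfline D" unfolding H4_halfline_def
  proof (intro conjI allI impI)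
    show "continuous_on {0..} (D 4)" unfolding D_def [abs_def] by (intro continuous_intros)
  qed (use der int in auto)
  have bc: "bc_H \<alpha> \<alpha>1 \<alpha>2 D"
    unfolding bc_H_def D_def a a1 a2 using k
    by (simp add: field_simps power2_eq_square power3_eq_cube flip: of_real_mult of_real_add of_real_diff of_real_minus)
  have ev: "\<forall>t\<ge>0. D 4 t = of_real (k^4) * D 0 t" by (simp add: D_def)
  have nz: "\<exists>t\<ge>0. D 0 t \<noteq> 0" by (rule exI[of _ 0]) (simp add: D_def)
  show ?thesis unfolding is_eigenvalue_H_def using H bc nz ev by blast
qed

lemma Omega_deriv:
  "(Omega \<alpha> \<alpha>1 \<alpha>2 has_field_derivative
     ((1 - \<i>) * of_real \<alpha>2 + 4 * \<i> * of_real (Re \<alpha>) * z - 3 * (1 + \<i>) * of_real \<alpha>1 * z\<^sup>2 - 4 * z^3)) (at z)"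
  unfolding Omega_def [abs_def]
  by (auto intro!: derivative_eq_intros simp: algebra_simps power2_eq_square power3_eq_cube)



theorem proposition5p7:
  fixes \<alpha> :: complex and \<alpha>1 \<alpha>2 k :: real
  assumes "k > 0"
  shows "(is_eigenvalue_H \<alpha> \<alpha>1 \<alpha>2 (of_real (k ^ 4)) \<longleftrightarrow>
           (\<alpha> = cnj \<alpha> \<and> \<alpha>1 = (Re \<alpha> - k\<^sup>2) / k \<and> \<alpha>2 = (Re \<alpha> + k\<^sup>2) * k))
       \<and> (is_eigenvalue_H \<alpha> \<alpha>1 \<alpha>2 (of_real (k ^ 4)) \<longrightarrow>
           Omega \<alpha> \<alpha>1 \<alpha>2 (of_real k) = 0 \<and>
           deriv (Omega \<alpha> \<alpha>1 \<alpha>2) (of_real k) = - 2 * of_real k * (\<alpha> - \<i> * of_real (k\<^sup>2)) \<and>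
           deriv (Omega \<alpha> \<alpha>1 \<alpha>2) (of_real k) \<noteq> 0)"
proof -
  have k: "k > 0" by fact
  have fw: "\<alpha> = of_real (Re \<alpha>) \<and> \<alpha>1 = (Re \<alpha> - k\<^sup>2) / k \<and> \<alpha>2 = (Re \<alpha> + k\<^sup>2) * k"
    if ev: "is_eigenvalue_H \<alpha> \<alpha>1 \<alpha>2 (of_real (k ^ 4))"
  proof -
    from forward[OF k ev] have a: "\<alpha> = of_real (k\<^sup>2 + \<alpha>1 * k)" and a2: "\<alpha>2 = k^3 + k * (k\<^sup>2 + \<alpha>1 * k)"
      by auto
    have r: "Re \<alpha> = k\<^sup>2 + \<alpha>1 * k" using a by simp
    show ?thesis using a a2 r k by (auto simp: field_simps power2_eq_square power3_eq_cube)
  qed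
  have iff: "is_eigenvalue_H \<alpha> \<alpha>1 \<alpha>2 (of_real (k ^ 4)) \<longleftrightarrow>
           (\<alpha> = cnj \<alpha> \<and> \<alpha>1 = (Re \<alpha> - k\<^sup>2) / k \<and> \<alpha>2 = (Re \<alpha> + k\<^sup>2) * k)"
  proof
    assume ev: "is_eigenvalue_H \<alpha> \<alpha>1 \<alpha>2 (of_real (k ^ 4))"
    from fw[OF ev] show "\<alpha> = cnj \<alpha> \<and> \<alpha>1 = (Re \<alpha> - k\<^sup>2) / k \<and> \<alpha>2 = (Re \<alpha> + k\<^sup>2) * k"
      by (metis complex_cnj_complex_of_real)
  next
    assume c: "\<alpha> = cnj \<alpha> \<and> \<alpha>1 = (Re \<alpha> - k\<^sup>2) / k \<and> \<alpha>2 = (Re \<alpha> + k\<^sup>2) * k"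
    then have "Im \<alpha> = 0" by (metis complex_cnj_complex_of_real complex_of_real_def Reals_cnj_iff Reals_def complex_is_Real_iff)
    then have "\<alpha> = of_real (Re \<alpha>)" by (simp add: complex_eq_iff)
    then show "is_eigenvalue_H \<alpha> \<alpha>1 \<alpha>2 (of_real (k ^ 4))"
      using backward[OF k, of \<alpha> "Re \<alpha>" \<alpha>1 \<alpha>2] c by blast
  qed
  have om: "Omega \<alpha> \<alpha>1 \<alpha>2 (of_real k) = 0 \<and>
           deriv (Omega \<alpha> \<alpha>1 \<alpha>2) (of_real k) = - 2 * of_real k * (\<alpha> - \<i> * of_real (k\<^sup>2)) \<and>
           deriv (Omega \<alpha> \<alpha>1 \<alpha>2) (of_real k) \<noteq> 0"
    if ev: "is_eigenvalue_H \<alpha> \<alpha>1 \<alpha>2 (of_real (k ^ 4))"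
  proof -
    define a where "a = Re \<alpha>"
    have a: "\<alpha> = of_real a" and a1: "\<alpha>1 = (a - k\<^sup>2) / k" and a2: "\<alpha>2 = (a + k\<^sup>2) * k"
      using fw[OF ev] unfolding a_def by auto
    have O: "Omega \<alpha> \<alpha>1 \<alpha>2 (of_real k) = 0"
      unfolding Omega_def alpha0_def a a1 a2 using k
      by (simp add: complex_eq_iff field_simps power2_eq_square power3_eq_cube power4_eq_xxxx)
    have d: "deriv (Omega \<alpha> \<alpha>1 \<alpha>2) (of_real k) =
       (1 - \<i>) * of_real \<alpha>2 + 4 * \<i> * of_real (Re \<alpha>) * of_real k - 3 * (1 + \<i>) * of_real \<alpha>1 * (of_real k)\<^sup>2 - 4 * (of_real k)^3"
      by (rule DERIV_imp_deriv[OF Omega_deriv])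
    have e: "(1 - \<i>) * of_real \<alpha>2 + 4 * \<i> * of_real (Re \<alpha>) * of_real k - 3 * (1 + \<i>) * of_real \<alpha>1 * (of_real k)\<^sup>2 - 4 * (of_real k)^3
       = - 2 * of_real k * (\<alpha> - \<i> * of_real (k\<^sup>2))"
      unfolding a a1 a2 using k
      by (simp add: complex_eq_iff field_simps power2_eq_square power3_eq_cube)
    have d2: "deriv (Omega \<alpha> \<alpha>1 \<alpha>2) (of_real k) = - 2 * of_real k * (\<alpha> - \<i> * of_real (k\<^sup>2))"
      using d e by simp
    have "Im (deriv (Omega \<alpha> \<alpha>1 \<alpha>2) (of_real k)) = 2 * k^3"
      unfolding d2 by (simp add: a power2_eq_square power3_eq_cube)
    then have "deriv (Omega \<alpha> \<alpha>1 \<alpha>2) (of_real k) \<noteq> 0" using k by auto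
    with O d2 show ?thesis by blast
  qed
  show ?thesis using iff om by blast
qed

end
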